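(* With $H(\alpha):=H(\theta(\alpha))$ and $R(\alpha):=\sum_{i=1}^N\overline\theta_i(\alpha)\frac{\beta_i^2}{2}$: (1) $H(1)=-\sum_{i,j}\pi_iP_{ij}\log P_{ij}$ and $R(1)=\sum_{i=1}^N\pi_i\frac{\beta_i^2}{2}$; (2) $H(0)=\log\rho_0$; (3) the function $\alpha\mapsto H(\alpha)-\alpha^2R(\alpha)$ is non-increasing on $[0,1]$.
   Context: $V=\{1,\dots,N\}$; $P$ row-stochastic irreducible aperiodic with stationary distribution $\pi>0$; $\beta\in\mathbb R^N$; $\rho_0$ is the spectral radius of the 0-1 matrix $P_0$ with $(P_0)_{ij}=1$ iff $P_{ij}>0$. For $\alpha\in\mathbb R$ define $M(\alpha)\in\mathbb R^{N\times N}$ by $[M(\alpha)]_{ij}=P_{ij}^\alpha e^{-\alpha(1-\alpha)\beta_i^2/2}$ if $P_{ij}>0$ and $[M(\alpha)]_{ij}=0$ if $P_{ij}=0$ (so $M(0)=P_0$). Let $\lambda(\alpha)$ be the Perron root (spectral radius) of $M(\alpha)$ and $v(\alpha)>0$ a right Perron eigenvector. Let $Q(\alpha)_{ij}=\frac{[M(\alpha)]_{ij}v_j(\alpha)}{\lambda(\alpha)v_i(\alpha)}$ (a stochastic, irreducible, aperiodic matrix), $\overline\theta(\alpha)$ its stationary distribution, and $\theta(\alpha)_{ij}=\overline\theta_i(\alpha)Q(\alpha)_{ij}$. $H(\theta)=-\sum_{i,j}\theta_{ij}\log(\theta_{ij}/\overline\theta_i)$ with $\overline\theta=\theta\mathbf1$,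 $0\log0=0$. *)

theory Defs
  imports Complex_Main
begin

text \<open>Matrices indexed by a finite type 'n (so V = UNIV :: 'n set, N = CARD('n)),
  represented as functions 'n \<Rightarrow> 'n \<Rightarrow> real.\<close>

definition stochastic_mat :: "('n::finite \<Rightarrow> 'n \<Rightarrow> real) \<Rightarrow> bool" where
  "stochastic_mat P \<longleftrightarrow> (\<forall>i j. P i j \<ge> 0) \<and> (\<forall>i. (\<Sum>j\<in>UNIV. P i j) = 1)"

definition edges_of :: "('n \<Rightarrow> 'n \<Rightarrow> real) \<Rightarrow> ('n \<times> 'n) set" where
  "edges_of P = {(i, j). P i j > 0}"

definition irreducible_mat :: "('n::finite \<Rightarrow> 'n \<Rightarrow> real) \<Rightarrow> bool" where
  "irreducible_mat P \<longleftrightarrow> (\<forall>i j. (i, j) \<in> (edges_of P)\<^sup>+)"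

definition aperiodic_mat :: "('n::finite \<Rightarrow> 'n \<Rightarrow> real) \<Rightarrow> bool" where
  "aperiodic_mat P \<longleftrightarrow> (\<forall>i. Gcd {k::nat. 0 < k \<and> (i, i) \<in> (edges_of P) ^^ k} = 1)"

definition stationary_dist :: "('n::finite \<Rightarrow> 'n \<Rightarrow> real) \<Rightarrow> ('n \<Rightarrow> real) \<Rightarrow> bool" where
  "stationary_dist P p \<longleftrightarrow> (\<forall>i. p i \<ge> 0) \<and> (\<Sum>i\<in>UNIV. p i) = 1 \<and>
     (\<forall>j. (\<Sum>i\<in>UNIV. p i * P i j) = p j)"

definition spec_rad :: "('n::finite \<Rightarrow> 'n \<Rightarrow> real) \<Rightarrow> real" where
  "spec_rad A = Sup {cmod \<mu> | \<mu>. \<exists>x :: 'n \<Rightarrow> complex. x \<noteq> (\<lambda>_. 0) \<and>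
       (\<forall>i. (\<Sum>j\<in>UNIV. complex_of_real (A i j) * x j) = \<mu> * x i)}"

definition zero_one_mat :: "('n::finite \<Rightarrow> 'n \<Rightarrow> real) \<Rightarrow> 'n \<Rightarrow> 'n \<Rightarrow> real" where
  "zero_one_mat P i j = (if P i j > 0 then 1 else 0)"

definition Mmat :: "('n::finite \<Rightarrow> 'n \<Rightarrow> real) \<Rightarrow> ('n \<Rightarrow> real) \<Rightarrow> real \<Rightarrow> 'n \<Rightarrow> 'n \<Rightarrow> real" where
  "Mmat P \<beta> \<alpha> i j = (if P i j > 0 then P i j powr \<alpha> * exp (- \<alpha> * (1 - \<alpha>) * (\<beta> i)\<^sup>2 / 2) else 0)"

definition perron_root :: "('n::finite \<Rightarrow> 'n \<Rightarrow> real) \<Rightarrow> ('n \<Rightarrow> real) \<Rightarrow> real \<Rightarrow> real" where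
  "perron_root P \<beta> \<alpha> = spec_rad (Mmat P \<beta> \<alpha>)"

definition perron_vec :: "('n::finite \<Rightarrow> 'n \<Rightarrow> real) \<Rightarrow> ('n \<Rightarrow> real) \<Rightarrow> real \<Rightarrow> 'n \<Rightarrow> real" where
  "perron_vec P \<beta> \<alpha> = (SOME v. (\<forall>i. v i > 0) \<and>
      (\<forall>i. (\<Sum>j\<in>UNIV. Mmat P \<beta> \<alpha> i j * v j) = perron_root P \<beta> \<alpha> * v i))"

definition Qmat :: "('n::finite \<Rightarrow> 'n \<Rightarrow> real) \<Rightarrow> ('n \<Rightarrow> real) \<Rightarrow> real \<Rightarrow> 'n \<Rightarrow> 'n \<Rightarrow> real" where
  "Qmat P \<beta> \<alpha> i j = Mmat P \<beta> \<alpha> i j * perron_vec P \<beta> \<alpha> j /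
      (perron_root P \<beta> \<alpha> * perron_vec P \<beta> \<alpha> i)"

definition thetabar :: "('n::finite \<Rightarrow> 'n \<Rightarrow> real) \<Rightarrow> ('n \<Rightarrow> real) \<Rightarrow> real \<Rightarrow> 'n \<Rightarrow> real" where
  "thetabar P \<beta> \<alpha> = (SOME p. stationary_dist (Qmat P \<beta> \<alpha>) p)"

definition theta :: "('n::finite \<Rightarrow> 'n \<Rightarrow> real) \<Rightarrow> ('n \<Rightarrow> real) \<Rightarrow> real \<Rightarrow> 'n \<Rightarrow> 'n \<Rightarrow> real" where
  "theta P \<beta> \<alpha> i j = thetabar P \<beta> \<alpha> i * Qmat P \<beta> \<alpha> i j"

definition entropy :: "('n::finite \<Rightarrow> 'n \<Rightarrow> real) \<Rightarrow> real" where
  "entropy th = - (\<Sum>i\<in>UNIV. \<Sum>j\<in>UNIV.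
      (if th i j = 0 then 0 else th i j * ln (th i j / (\<Sum>k\<in>UNIV. th i k))))"

definition Hfun :: "('n::finite \<Rightarrow> 'n \<Rightarrow> real) \<Rightarrow> ('n \<Rightarrow> real) \<Rightarrow> real \<Rightarrow> real" where
  "Hfun P \<beta> \<alpha> = entropy (theta P \<beta> \<alpha>)"

definition Rfun :: "('n::finite \<Rightarrow> 'n \<Rightarrow> real) \<Rightarrow> ('n \<Rightarrow> real) \<Rightarrow> real \<Rightarrow> real" where
  "Rfun P \<beta> \<alpha> = (\<Sum>i\<in>UNIV. thetabar P \<beta> \<alpha> i * (\<beta> i)\<^sup>2 / 2)"

end

theory Submission
  imports Defs "HOL-Analysis.Analysis"
begin


definition Smp :: "(real^'n::finite) set" where
  "Smp = {x. (\<forall>i. 0 \<le> x$i) \<and> (\<Sum>i\<in>UNIV. x$i) = 1}"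

lemma Smp_compact: "compact (Smp :: (real^'n::finite) set)"
proof -
  have cl: "closed (Smp :: (real^'n::finite) set)"
    unfolding Smp_def
    by (intro closed_Collect_conj closed_Collect_all closed_Collect_le closed_Collect_eq continuous_intros)
  have "Smp \<subseteq> cbox (0::real^'n) 1"
  proof
    fix x :: "real^'n" assume x: "x \<in> Smp"
    have "x$i \<le> 1" for i
    proof -
      have "x$i \<le> (\<Sum>j\<in>UNIV. x$j)"
        by (rule member_le_sum) (use x in \<open>auto simp: Smp_def\<close>)
      then show ?thesis using x by (simp add: Smp_def)
    qed
    then show "x \<in> cbox 0 1" using x by (auto simp: mem_box_cart Smp_def)
  qed
  then have "bounded (Smp :: (real^'n::finite) set)"
    using bounded_cbox bounded_subset by blast
  then show ?thesis using cl compact_eq_bounded_closed by blast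
qed

lemma Smp_convex: "convex (Smp :: (real^'n::finite) set)"
  unfolding convex_def Smp_def
  by (auto simp: sum.distrib sum_distrib_left[symmetric])

lemma Smp_ne: "(\<chi> i. 1 / real CARD('n)) \<in> (Smp :: (real^'n::finite) set)"
  by (simp add: Smp_def)

lemma brouwer_Smp:
  fixes g :: "real^'n::finite \<Rightarrow> real^'n"
  assumes "continuous_on Smp g" "\<And>x. x \<in> Smp \<Longrightarrow> g x \<in> Smp"
  obtains x where "x \<in> Smp" "g x = x"
  using brouwer[OF Smp_compact Smp_convex _ assms(1)] Smp_ne assms(2) by blast


lemma perron_exists:
  fixes A :: "'n::finite \<Rightarrow> 'n \<Rightarrow> real"
  assumes nn: "\<forall>i j. A i j \<ge> 0" and irr: "\<forall>i j. (i,j) \<in> (edges_of A)\<^sup>+"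
  shows "\<exists>v r. r > 0 \<and> (\<forall>i. v i > 0) \<and> (\<forall>i. (\<Sum>j\<in>UNIV. A i j * v j) = r * v i)"
proof -
  define AM :: "real^'n^'n" where "AM = (\<chi> i j. A i j)"
  have AMv: "(AM *v x) $ i = (\<Sum>j\<in>UNIV. A i j * x$j)" for x i
    by (simp add: AM_def matrix_vector_mult_def)
  define den where "den x = (\<Sum>i\<in>UNIV. (AM *v x) $ i)" for x
  have pred: "\<exists>c. A c k > 0" for k
  proof -
    have "(k,k) \<in> (edges_of A)\<^sup>+" using irr by blast
    then obtain c where "(c,k) \<in> edges_of A" by (meson tranclE)
    then show ?thesis by (auto simp: edges_of_def)
  qed
  have comp_nn: "x \<in> Smp \<Longrightarrow> (AM *v x) $ i \<ge> 0" for x i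
    unfolding AMv using nn by (auto simp: Smp_def intro!: sum_nonneg)
  have den_pos: "den x > 0" if x: "x \<in> Smp" for x
  proof -
    have "\<exists>k. x$k > 0"
    proof (rule ccontr)
      assume "\<not> ?thesis"
      then have "\<forall>k. x$k = 0" using x unfolding Smp_def by (auto simp: not_less intro: order_antisym)
      then show False using x by (simp add: Smp_def)
    qed
    then obtain k where k: "x$k > 0" by blast
    obtain c where c: "A c k > 0" using pred by blast
    have "A c k * x$k \<le> (\<Sum>j\<in>UNIV. A c j * x$j)"
      by (rule member_le_sum[where f="\<lambda>j. A c j * x$j"]) (use nn x in \<open>auto simp: Smp_def\<close>)
    then have "(AM *v x) $ c > 0" unfolding AMv using c k by (smt (verit) mult_pos_pos)
    moreover have "(AM *v x) $ c \<le> den x"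
      unfolding den_def by (rule member_le_sum) (use comp_nn x in auto)
    ultimately show ?thesis by linarith
  qed
  define g where "g x = (1 / den x) *\<^sub>R (AM *v x)" for x
  have cont: "continuous_on Smp g"
    unfolding g_def den_def
    by (intro continuous_intros) (use den_pos in \<open>fastforce simp: den_def\<close>)
  have gS: "g x \<in> Smp" if "x \<in> Smp" for x
  proof -
    have "den x > 0" using den_pos that by blast
    moreover have "(\<Sum>i\<in>UNIV. g x $ i) = (\<Sum>i\<in>UNIV. (AM *v x) $ i) / den x"
      by (simp add: g_def sum_divide_distrib)
    ultimately show ?thesis using comp_nn[OF that]
      by (auto simp: Smp_def g_def den_def)
  qed
  obtain x where x: "x \<in> Smp" "g x = x" using brouwer_Smp[OF cont gS] by blast
  define r where "r = den x"
  have rpos: "r > 0" using den_pos x r_def by blast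
  have eig: "(\<Sum>j\<in>UNIV. A i j * x$j) = r * x$i" for i
  proof -
    have "(1 / r) * (AM *v x) $ i = x $ i" using x(2) unfolding g_def r_def
      by (metis vector_scaleR_component real_scaleR_def)
    then show ?thesis using rpos unfolding AMv by (simp add: field_simps)
  qed
  have xnn: "\<forall>i. x$i \<ge> 0" using x by (simp add: Smp_def)
  have zprop: "x$z = 0" if "x$y = 0" "(y,z) \<in> edges_of A" for y z
  proof -
    have Ayz: "A y z > 0" using that by (simp add: edges_of_def)
    have "A y z * x$z \<le> (\<Sum>j\<in>UNIV. A y j * x$j)"
      by (rule member_le_sum[where f="\<lambda>j. A y j * x$j"]) (use nn xnn in auto)
    also have "\<dots> = 0" using eig[of y] that by simp
    finally have "A y z * x$z \<le> 0" .
    then show ?thesis using Ayz xnn by (smt (verit) mult_pos_pos)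
  qed
  have pos: "x$i > 0" for i
  proof (rule ccontr)
    assume "\<not> x$i > 0"
    then have xi: "x$i = 0" using xnn[rule_format, of i] by linarith
    have "x$k = 0" for k
    proof -
      have "(i,k) \<in> (edges_of A)\<^sup>+" using irr by blast
      then show ?thesis
        by (induction rule: trancl_induct) (use xi zprop in blast)+
    qed
    then show False using x by (simp add: Smp_def)
  qed
  show ?thesis
    by (rule exI[of _ "\<lambda>i. x$i"], rule exI[of _ r]) (use rpos pos eig in auto)
qed

lemma stationary_exists:
  fixes Q :: "'n::finite \<Rightarrow> 'n \<Rightarrow> real"
  assumes "stochastic_mat Q"
  shows "\<exists>p. stationary_dist Q p"
proof -
  have nn: "\<forall>i j. Q i j \<ge> 0" and rs: "\<forall>i. (\<Sum>j\<in>UNIV. Q i j) = 1"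
    using assms by (auto simp: stochastic_mat_def)
  define QT :: "real^'n^'n" where "QT = (\<chi> j i. Q i j)"
  have QTv: "(QT *v x) $ j = (\<Sum>i\<in>UNIV. Q i j * x$i)" for x j
    by (simp add: QT_def matrix_vector_mult_def)
  define g where "g x = QT *v x" for x
  have cont: "continuous_on Smp g" unfolding g_def by (intro continuous_intros)
  have gS: "g x \<in> Smp" if x: "x \<in> Smp" for x
  proof -
    have "(\<Sum>j\<in>UNIV. g x $ j) = (\<Sum>i\<in>UNIV. x$i * (\<Sum>j\<in>UNIV. Q i j))"
      unfolding g_def QTv by (subst sum.swap) (simp add: sum_distrib_left mult.commute)
    also have "\<dots> = 1" using rs x by (simp add: Smp_def)
    finally have "(\<Sum>j\<in>UNIV. g x $ j) = 1" .
    moreover have "g x $ j \<ge> 0" for j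
      using x nn unfolding g_def QTv Smp_def by (auto intro!: sum_nonneg)
    ultimately show ?thesis unfolding Smp_def by auto
  qed
  obtain x where x: "x \<in> Smp" "g x = x" using brouwer_Smp[OF cont gS] by blast
  have "stationary_dist Q (\<lambda>i. x$i)"
    unfolding stationary_dist_def
  proof (intro conjI allI)
    show "0 \<le> x$i" for i using x by (simp add: Smp_def)
    show "(\<Sum>i\<in>UNIV. x$i) = 1" using x by (simp add: Smp_def)
    show "(\<Sum>i\<in>UNIV. x$i * Q i j) = x$j" for j
      using arg_cong[OF x(2), of "\<lambda>y. y$j"] unfolding g_def QTv by (simp add: mult.commute)
  qed
  then show ?thesis by blast
qed




lemma spec_rad_eq:
  fixes A :: "'n::finite \<Rightarrow> 'n \<Rightarrow> real"
  assumes nn: "\<forall>i j. A i j \<ge> 0" and vpos: "\<forall>i. v i > 0" and r: "r \<ge> 0"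
    and eig: "\<forall>i. (\<Sum>j\<in>UNIV. A i j * v j) = r * v i"
  shows "spec_rad A = r"
  unfolding spec_rad_def
proof (rule cSup_eq_maximum)
  let ?x = "\<lambda>j. complex_of_real (v j)"
  have "?x \<noteq> (\<lambda>_. 0)" using vpos by (metis less_irrefl of_real_eq_0_iff)
  moreover have "(\<Sum>j\<in>UNIV. complex_of_real (A i j) * ?x j) = complex_of_real r * ?x i" for i
  proof -
    have "complex_of_real (\<Sum>j\<in>UNIV. A i j * v j) = complex_of_real (r * v i)" using eig by simp
    then show ?thesis by (simp add: of_real_sum)
  qed
  ultimately have "cmod (complex_of_real r) \<in> {cmod \<mu> |\<mu>. \<exists>x. x \<noteq> (\<lambda>_. 0) \<and>
       (\<forall>i. (\<Sum>j\<in>UNIV. complex_of_real (A i j) * x j) = \<mu> * x i)}"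
    by blast
  then show "r \<in> {cmod \<mu> |\<mu>. \<exists>x. x \<noteq> (\<lambda>_. 0) \<and>
       (\<forall>i. (\<Sum>j\<in>UNIV. complex_of_real (A i j) * x j) = \<mu> * x i)}" using r by simp
next
  fix y assume "y \<in> {cmod \<mu> |\<mu>. \<exists>x. x \<noteq> (\<lambda>_. 0) \<and>
       (\<forall>i. (\<Sum>j\<in>UNIV. complex_of_real (A i j) * x j) = \<mu> * x i)}"
  then obtain \<mu> x where y: "y = cmod \<mu>" and x0: "x \<noteq> (\<lambda>_. 0)"
    and ex: "\<forall>i. (\<Sum>j\<in>UNIV. complex_of_real (A i j) * x j) = \<mu> * x i" by blast
  define c where "c = Max ((\<lambda>i. cmod (x i) / v i) ` UNIV)"
  have cge: "cmod (x i) / v i \<le> c" for i unfolding c_def by (rule Max_ge) auto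
  have "c \<in> range (\<lambda>i. cmod (x i) / v i)" unfolding c_def by (rule Max_in) auto
  then obtain i0 where i0: "c = cmod (x i0) / v i0" by auto
  obtain k where k: "x k \<noteq> 0" using x0 by auto
  have "0 < cmod (x k) / v k" using k vpos by auto
  then have cpos: "c > 0" using cge[of k] by linarith
  have xle: "cmod (x j) \<le> c * v j" for j using cge[of j] vpos by (simp add: field_simps)
  have "cmod \<mu> * cmod (x i0) = cmod (\<Sum>j\<in>UNIV. complex_of_real (A i0 j) * x j)"
    using ex by (simp add: norm_mult)
  also have "\<dots> \<le> (\<Sum>j\<in>UNIV. cmod (complex_of_real (A i0 j) * x j))" by (rule norm_sum)
  also have "\<dots> = (\<Sum>j\<in>UNIV. A i0 j * cmod (x j))" using nn by (simp add: norm_mult)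
  also have "\<dots> \<le> (\<Sum>j\<in>UNIV. A i0 j * (c * v j))"
    by (rule sum_mono) (use nn xle in \<open>simp add: mult_left_mono\<close>)
  also have "\<dots> = c * (\<Sum>j\<in>UNIV. A i0 j * v j)"
    by (simp add: sum_distrib_left mult.left_commute)
  also have "\<dots> = c * r * v i0" using eig by simp
  finally have le1: "cmod \<mu> * cmod (x i0) \<le> c * r * v i0" .
  have "c * v i0 = cmod (x i0)" using i0 vpos[rule_format, of i0] by simp
  then have "cmod \<mu> * (c * v i0) \<le> r * (c * v i0)" using le1 by (metis mult.assoc mult.commute)
  moreover have "c * v i0 > 0" using cpos vpos by simp
  ultimately have "cmod \<mu> \<le> r" by (meson mult_le_cancel_right_pos)
  then show "y \<le> r" using y by simp
qed

lemma stationary_unique: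
  fixes P :: "'n::finite \<Rightarrow> 'n \<Rightarrow> real"
  assumes irr: "irreducible_mat P" and sto: "stochastic_mat P"
    and pi: "stationary_dist P \<pi>" "\<forall>i. \<pi> i > 0" and p: "stationary_dist P p"
  shows "p = \<pi>"
proof -
  have nn: "\<forall>i j. P i j \<ge> 0" using sto by (simp add: stochastic_mat_def)
  define c where "c = Min ((\<lambda>i. p i / \<pi> i) ` UNIV)"
  have cle: "c \<le> p i / \<pi> i" for i unfolding c_def by (rule Min_le) auto
  have "c \<in> range (\<lambda>i. p i / \<pi> i)" unfolding c_def by (rule Min_in) auto
  then obtain k where k: "c = p k / \<pi> k" by auto
  define x where "x i = p i - c * \<pi> i" for i
  have xnn: "x i \<ge> 0" for i using cle[of i] pi(2) unfolding x_def by (simp add: field_simps)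
  have xk: "x k = 0" using k pi(2)[rule_format, of k] unfolding x_def by (simp add: field_simps)
  have xst: "(\<Sum>i\<in>UNIV. x i * P i j) = x j" for j
  proof -
    have "(\<Sum>i\<in>UNIV. x i * P i j) = (\<Sum>i\<in>UNIV. p i * P i j) - c * (\<Sum>i\<in>UNIV. \<pi> i * P i j)"
      by (simp add: x_def left_diff_distrib sum_subtractf sum_distrib_left mult.assoc)
    then show ?thesis using p pi(1) unfolding x_def stationary_dist_def by simp
  qed
  have bk: "x y = 0" if "(y,z) \<in> edges_of P" "x z = 0" for y z
  proof -
    have Pyz: "P y z > 0" using that by (simp add: edges_of_def)
    have "x y * P y z \<le> (\<Sum>i\<in>UNIV. x i * P i z)"
      by (rule member_le_sum[where f="\<lambda>i. x i * P i z"]) (use nn xnn in auto)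
    then have "x y * P y z \<le> 0" using xst[of z] that by simp
    then show ?thesis using Pyz xnn[of y] by (smt (verit) mult_pos_pos)
  qed
  have x0: "x i = 0" for i
  proof -
    have "(i,k) \<in> (edges_of P)\<^sup>+" using irr by (simp add: irreducible_mat_def)
    then show ?thesis
      by (induction rule: converse_trancl_induct) (use bk xk in blast)+
  qed
  then have pc: "p i = c * \<pi> i" for i unfolding x_def by (metis eq_iff_diff_eq_0)
  have "1 = (\<Sum>i\<in>UNIV. p i)" using p by (simp add: stationary_dist_def)
  also have "\<dots> = c" using pi(1) by (simp add: pc sum_distrib_left[symmetric] stationary_dist_def)
  finally show ?thesis using pc by auto
qed

lemma max_principle:
  fixes P :: "'n::finite \<Rightarrow> 'n \<Rightarrow> real"
  assumes irr: "irreducible_mat P" and sto: "stochastic_mat P"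
    and eig: "\<forall>i. (\<Sum>j\<in>UNIV. P i j * v j) = v i"
  shows "v i = v j"
proof -
  have nn: "\<forall>i j. P i j \<ge> 0" and rs: "\<forall>i. (\<Sum>j\<in>UNIV. P i j) = 1"
    using sto by (auto simp: stochastic_mat_def)
  define m where "m = Max (v ` UNIV)"
  have vle: "v i \<le> m" for i unfolding m_def by (rule Max_ge) auto
  have "m \<in> range v" unfolding m_def by (rule Max_in) auto
  then obtain k where k: "v k = m" by auto
  have step: "v z = m" if "v y = m" "(y,z) \<in> edges_of P" for y z
  proof (rule ccontr)
    assume "v z \<noteq> m"
    then have lt: "v z < m" using vle[of z] by linarith
    have Pyz: "P y z > 0" using that by (simp add: edges_of_def)
    have "(\<Sum>j\<in>UNIV. P y j * v j) < (\<Sum>j\<in>UNIV. P y j * m)"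
      by (rule sum_strict_mono_ex1) (use nn vle Pyz lt in \<open>auto intro: mult_left_mono intro!: exI[of _ z]\<close>)
    also have "\<dots> = m" using rs by (simp add: sum_distrib_right[symmetric])
    finally show False using eig that by simp
  qed
  have all: "v i = m" for i
  proof -
    have "(k,i) \<in> (edges_of P)\<^sup>+" using irr by (simp add: irreducible_mat_def)
    then show ?thesis by (induction rule: trancl_induct) (use step k in blast)+
  qed
  show ?thesis using all by simp
qed



lemma gibbs_ident:
  fixes Q Q' w :: "'n::finite \<Rightarrow> 'n \<Rightarrow> real" and p v :: "'n \<Rightarrow> real"
  assumes Q'row: "\<forall>i. (\<Sum>j\<in>UNIV. Q' i j) = 1"
    and psum: "(\<Sum>i\<in>UNIV. p i) = 1" and pstat: "\<forall>j. (\<Sum>i\<in>UNIV. p i * Q' i j) = p j"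
    and sup: "\<forall>i j. Q' i j \<noteq> 0 \<longrightarrow> ln (Q i j) = w i j + ln (v j) - ln lam - ln (v i)"
  shows "(\<Sum>i\<in>UNIV. \<Sum>j\<in>UNIV. p i * Q' i j * w i j) - (\<Sum>i\<in>UNIV. \<Sum>j\<in>UNIV. p i * Q' i j * ln (Q' i j))
     = ln lam + (\<Sum>i\<in>UNIV. \<Sum>j\<in>UNIV. p i * Q' i j * (ln (Q i j) - ln (Q' i j)))"
proof -
  have trm: "p i * Q' i j * w i j = p i * Q' i j * (ln (Q i j) - ln (Q' i j)) + p i * Q' i j * ln (Q' i j)
      + ln lam * (p i * Q' i j) + p i * Q' i j * ln (v i) - p i * Q' i j * ln (v j)" for i j
  proof (cases "Q' i j = 0")
    case True then show ?thesis by simp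
  next
    case False
    then have wi: "w i j = ln (Q i j) - ln (v j) + ln lam + ln (v i)" using sup by auto
    show ?thesis unfolding wi by (simp add: algebra_simps)
  qed
  have s1: "(\<Sum>i\<in>UNIV. \<Sum>j\<in>UNIV. ln lam * (p i * Q' i j)) = ln lam"
  proof -
    have "(\<Sum>i\<in>UNIV. \<Sum>j\<in>UNIV. ln lam * (p i * Q' i j)) = ln lam * (\<Sum>i\<in>UNIV. p i * (\<Sum>j\<in>UNIV. Q' i j))"
      by (simp add: sum_distrib_left)
    then show ?thesis using Q'row psum by simp
  qed
  have s2: "(\<Sum>i\<in>UNIV. \<Sum>j\<in>UNIV. p i * Q' i j * ln (v i)) = (\<Sum>i\<in>UNIV. p i * ln (v i))"
  proof -
    have "(\<Sum>i\<in>UNIV. \<Sum>j\<in>UNIV. p i * Q' i j * ln (v i)) = (\<Sum>i\<in>UNIV. p i * ln (v i) * (\<Sum>j\<in>UNIV. Q' i j))"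
      by (simp add: sum_distrib_left mult_ac)
    then show ?thesis using Q'row by simp
  qed
  have s3: "(\<Sum>i\<in>UNIV. \<Sum>j\<in>UNIV. p i * Q' i j * ln (v j)) = (\<Sum>i\<in>UNIV. p i * ln (v i))"
  proof -
    have "(\<Sum>i\<in>UNIV. \<Sum>j\<in>UNIV. p i * Q' i j * ln (v j)) = (\<Sum>j\<in>UNIV. (\<Sum>i\<in>UNIV. p i * Q' i j) * ln (v j))"
      by (subst sum.swap) (simp add: sum_distrib_right)
    then show ?thesis using pstat by simp
  qed
  have "(\<Sum>i\<in>UNIV. \<Sum>j\<in>UNIV. p i * Q' i j * w i j) =
      (\<Sum>i\<in>UNIV. \<Sum>j\<in>UNIV. p i * Q' i j * (ln (Q i j) - ln (Q' i j)))
      + (\<Sum>i\<in>UNIV. \<Sum>j\<in>UNIV. p i * Q' i j * ln (Q' i j))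
      + (\<Sum>i\<in>UNIV. \<Sum>j\<in>UNIV. ln lam * (p i * Q' i j))
      + (\<Sum>i\<in>UNIV. \<Sum>j\<in>UNIV. p i * Q' i j * ln (v i))
      - (\<Sum>i\<in>UNIV. \<Sum>j\<in>UNIV. p i * Q' i j * ln (v j))"
    by (simp only: trm sum.distrib sum_subtractf)
  then show ?thesis using s1 s2 s3 by simp
qed

lemma gibbs_ineq:
  fixes Q Q' :: "'n::finite \<Rightarrow> 'n \<Rightarrow> real" and p :: "'n \<Rightarrow> real"
  assumes Q'row: "\<forall>i. (\<Sum>j\<in>UNIV. Q' i j) = 1" and Qrow: "\<forall>i. (\<Sum>j\<in>UNIV. Q i j) = 1"
    and Q'nn: "\<forall>i j. Q' i j \<ge> 0" and Qnn: "\<forall>i j. Q i j \<ge> 0" and pnn: "\<forall>i. p i \<ge> 0"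
    and sup: "\<forall>i j. Q' i j > 0 \<longleftrightarrow> Q i j > 0"
  shows "(\<Sum>i\<in>UNIV. \<Sum>j\<in>UNIV. p i * Q' i j * (ln (Q i j) - ln (Q' i j))) \<le> 0"
proof -
  have t: "p i * Q' i j * (ln (Q i j) - ln (Q' i j)) \<le> p i * (Q i j - Q' i j)" for i j
  proof (cases "Q' i j > 0")
    case True
    then have Qp: "Q i j > 0" using sup by blast
    have "ln (Q i j / Q' i j) \<le> Q i j / Q' i j - 1" by (rule ln_le_minus_one) (use Qp True in simp)
    then have "Q' i j * (ln (Q i j) - ln (Q' i j)) \<le> Q' i j * (Q i j / Q' i j - 1)"
      using Qp True by (simp add: ln_div mult_left_mono)
    also have "\<dots> = Q i j - Q' i j" using True by (simp add: field_simps)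
    finally show ?thesis using pnn by (simp add: mult.assoc mult_left_mono)
  next
    case False
    then have "Q' i j = 0" using Q'nn[rule_format, of i j] by linarith
    moreover have "Q i j = 0" using False sup Qnn[rule_format, of i j] by auto
    ultimately show ?thesis using pnn[rule_format, of i]
      by (simp add: mult_nonneg_nonpos)
  qed
  have "(\<Sum>i\<in>UNIV. \<Sum>j\<in>UNIV. p i * Q' i j * (ln (Q i j) - ln (Q' i j)))
      \<le> (\<Sum>i\<in>UNIV. \<Sum>j\<in>UNIV. p i * (Q i j - Q' i j))"
    by (intro sum_mono t)
  also have "\<dots> = (\<Sum>i\<in>UNIV. p i * ((\<Sum>j\<in>UNIV. Q i j) - (\<Sum>j\<in>UNIV. Q' i j)))"
    by (simp add: sum_distrib_left[symmetric] sum_subtractf[symmetric])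
  also have "\<dots> = 0" using Qrow Q'row by simp
  finally show ?thesis .
qed



lemma mono_alg:
  fixes a b ha hb La Lb ra rb :: real
  assumes a0: "0 \<le> a" and ab: "a < b" and ra: "ra \<ge> 0" and rb: "rb \<ge> 0"
    and i1: "hb + a*Lb - a*(1-a)*rb \<le> ha + a*La - a*(1-a)*ra"
    and i2: "ha + b*La - b*(1-b)*ra \<le> hb + b*Lb - b*(1-b)*rb"
  shows "hb - b\<^sup>2*rb \<le> ha - a\<^sup>2*ra"
proof -
  have b0: "b \<ge> 0" using a0 ab by linarith
  have m1: "b*(hb + a*Lb - a*(1-a)*rb) \<le> b*(ha + a*La - a*(1-a)*ra)"
    using i1 b0 by (rule mult_left_mono)
  have m2: "a*(ha + b*La - b*(1-b)*ra) \<le> a*(hb + b*Lb - b*(1-b)*rb)"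
    using i2 a0 by (rule mult_left_mono)
  have id: "(b-a)*(hb - a*b*rb) - (b-a)*(ha - a*b*ra) =
     (b*(hb + a*Lb - a*(1-a)*rb) - b*(ha + a*La - a*(1-a)*ra))
     + (a*(ha + b*La - b*(1-b)*ra) - a*(hb + b*Lb - b*(1-b)*rb))"
    by (simp add: algebra_simps)
  have "(b-a)*(hb - a*b*rb) \<le> (b-a)*(ha - a*b*ra)" using id m1 m2 by linarith
  then have k: "hb - a*b*rb \<le> ha - a*b*ra" using ab by simp
  have e1: "hb - b\<^sup>2*rb = (hb - a*b*rb) - b*(b-a)*rb" by (simp add: algebra_simps power2_eq_square)
  have e2: "ha - a\<^sup>2*ra = (ha - a*b*ra) + a*(b-a)*ra" by (simp add: algebra_simps power2_eq_square)
  have "b*(b-a)*rb \<ge> 0" using b0 ab rb by simp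
  moreover have "a*(b-a)*ra \<ge> 0" using a0 ab ra by simp
  ultimately show ?thesis using e1 e2 k by linarith
qed

lemma Mmat_pos: "Mmat P \<beta> a i j > 0 \<longleftrightarrow> P i j > 0"
  by (simp add: Mmat_def)

lemma Mmat_nn: "Mmat P \<beta> a i j \<ge> 0"
  by (simp add: Mmat_def)

lemma edges_M: "edges_of (Mmat P \<beta> a) = edges_of P"
  by (auto simp: edges_of_def Mmat_pos)

lemma alpha_facts:
  fixes P :: "'n::finite \<Rightarrow> 'n \<Rightarrow> real"
  assumes sto: "stochastic_mat P" and irr: "irreducible_mat P"
  shows "perron_root P \<beta> a > 0" "\<forall>i. perron_vec P \<beta> a i > 0"
    "\<forall>i. (\<Sum>j\<in>UNIV. Mmat P \<beta> a i j * perron_vec P \<beta> a j) = perron_root P \<beta> a * perron_vec P \<beta> a i"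
    "stochastic_mat (Qmat P \<beta> a)" "\<forall>i j. Qmat P \<beta> a i j > 0 \<longleftrightarrow> P i j > 0"
    "stationary_dist (Qmat P \<beta> a) (thetabar P \<beta> a)"
proof -
  have irrM: "\<forall>i j. (i,j) \<in> (edges_of (Mmat P \<beta> a))\<^sup>+"
    using irr by (simp add: edges_M irreducible_mat_def)
  have Mnn: "\<forall>i j. Mmat P \<beta> a i j \<ge> 0" by (simp add: Mmat_nn)
  obtain v r where vr: "r > 0" "\<forall>i. v i > 0" "\<forall>i. (\<Sum>j\<in>UNIV. Mmat P \<beta> a i j * v j) = r * v i"
    using perron_exists[OF Mnn irrM] by blast
  have rt: "perron_root P \<beta> a = r" unfolding perron_root_def
    by (rule spec_rad_eq[OF Mnn vr(2)]) (use vr in auto)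
  have "\<exists>v. (\<forall>i. v i > 0) \<and> (\<forall>i. (\<Sum>j\<in>UNIV. Mmat P \<beta> a i j * v j) = perron_root P \<beta> a * v i)"
    using vr rt by blast
  then have pv: "(\<forall>i. perron_vec P \<beta> a i > 0) \<and>
      (\<forall>i. (\<Sum>j\<in>UNIV. Mmat P \<beta> a i j * perron_vec P \<beta> a j) = perron_root P \<beta> a * perron_vec P \<beta> a i)"
    unfolding perron_vec_def by (rule someI_ex)
  show lp: "perron_root P \<beta> a > 0" using rt vr by simp
  show vp: "\<forall>i. perron_vec P \<beta> a i > 0" using pv by blast
  show ev: "\<forall>i. (\<Sum>j\<in>UNIV. Mmat P \<beta> a i j * perron_vec P \<beta> a j) = perron_root P \<beta> a * perron_vec P \<beta> a i"
    using pv by blast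
  have Qnn: "Qmat P \<beta> a i j \<ge> 0" for i j
    unfolding Qmat_def using lp vp[rule_format, of i] vp[rule_format, of j] Mnn
    by (intro divide_nonneg_pos mult_nonneg_nonneg mult_pos_pos) (auto simp: less_imp_le)
  show Qpos: "\<forall>i j. Qmat P \<beta> a i j > 0 \<longleftrightarrow> P i j > 0"
  proof (intro allI)
    fix i j
    have "perron_root P \<beta> a * perron_vec P \<beta> a i > 0" using lp vp by simp
    moreover have "perron_vec P \<beta> a j > 0" using vp by simp
    ultimately show "Qmat P \<beta> a i j > 0 \<longleftrightarrow> P i j > 0"
      unfolding Qmat_def using Mmat_pos[of P \<beta> a i j] Mnn
      by (metis divide_pos_pos less_eq_real_def mult_eq_0_iff mult_pos_pos not_less_iff_gr_or_eq
          zero_less_divide_iff)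
  qed
  have Qrow: "(\<Sum>j\<in>UNIV. Qmat P \<beta> a i j) = 1" for i
  proof -
    have "(\<Sum>j\<in>UNIV. Qmat P \<beta> a i j) = (\<Sum>j\<in>UNIV. Mmat P \<beta> a i j * perron_vec P \<beta> a j)
        / (perron_root P \<beta> a * perron_vec P \<beta> a i)"
      unfolding Qmat_def by (simp add: sum_divide_distrib)
    also have "\<dots> = 1" using ev lp vp by (simp add: less_imp_neq[symmetric])
    finally show ?thesis .
  qed
  show sQ: "stochastic_mat (Qmat P \<beta> a)" using Qnn Qrow by (simp add: stochastic_mat_def)
  obtain p where "stationary_dist (Qmat P \<beta> a) p" using stationary_exists[OF sQ] by blast
  then show "stationary_dist (Qmat P \<beta> a) (thetabar P \<beta> a)"
    unfolding thetabar_def by (rule someI[where P="stationary_dist (Qmat P \<beta> a)"])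
qed

lemma entropy_formula:
  fixes Q :: "'n::finite \<Rightarrow> 'n \<Rightarrow> real"
  assumes st: "stationary_dist Q p" and sQ: "stochastic_mat Q"
  shows "entropy (\<lambda>i j. p i * Q i j) = - (\<Sum>i\<in>UNIV. \<Sum>j\<in>UNIV. p i * Q i j * ln (Q i j))"
proof -
  have rs: "(\<Sum>k\<in>UNIV. p i * Q i k) = p i" for i
    using sQ by (simp add: stochastic_mat_def sum_distrib_left[symmetric])
  have t: "(if p i * Q i j = 0 then 0 else p i * Q i j * ln (p i * Q i j / (\<Sum>k\<in>UNIV. p i * Q i k)))
      = p i * Q i j * ln (Q i j)" for i j
    unfolding rs by auto
  show ?thesis unfolding entropy_def t ..
qed



definition Lf :: "('n::finite \<Rightarrow> 'n \<Rightarrow> real) \<Rightarrow> ('n \<Rightarrow> real) \<Rightarrow> real \<Rightarrow> real" where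
  "Lf P \<beta> b = (\<Sum>i\<in>UNIV. \<Sum>j\<in>UNIV. thetabar P \<beta> b i * Qmat P \<beta> b i j * ln (P i j))"

definition Sg :: "('n::finite \<Rightarrow> 'n \<Rightarrow> real) \<Rightarrow> ('n \<Rightarrow> real) \<Rightarrow> real \<Rightarrow> real \<Rightarrow> real" where
  "Sg P \<beta> a b = (\<Sum>i\<in>UNIV. \<Sum>j\<in>UNIV. thetabar P \<beta> b i * Qmat P \<beta> b i j *
      (ln (Qmat P \<beta> a i j) - ln (Qmat P \<beta> b i j)))"

lemma Hfun_formula:
  fixes P :: "'n::finite \<Rightarrow> 'n \<Rightarrow> real"
  assumes sto: "stochastic_mat P" and irr: "irreducible_mat P"
  shows "Hfun P \<beta> a = - (\<Sum>i\<in>UNIV. \<Sum>j\<in>UNIV. thetabar P \<beta> a i * Qmat P \<beta> a i j * ln (Qmat P \<beta> a i j))"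
proof -
  have "theta P \<beta> a = (\<lambda>i j. thetabar P \<beta> a i * Qmat P \<beta> a i j)"
    by (intro ext) (simp add: theta_def)
  then show ?thesis unfolding Hfun_def
    using entropy_formula[OF alpha_facts(6)[OF sto irr] alpha_facts(4)[OF sto irr]] by simp
qed

lemma key:
  fixes P :: "'n::finite \<Rightarrow> 'n \<Rightarrow> real"
  assumes sto: "stochastic_mat P" and irr: "irreducible_mat P"
  shows "Hfun P \<beta> b + a * Lf P \<beta> b - a*(1-a)*Rfun P \<beta> b = ln (perron_root P \<beta> a) + Sg P \<beta> a b"
    and "Sg P \<beta> a b \<le> 0"
proof -
  let ?p = "thetabar P \<beta> b" and ?Q' = "Qmat P \<beta> b" and ?Q = "Qmat P \<beta> a"
  let ?v = "perron_vec P \<beta> a" and ?lam = "perron_root P \<beta> a"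
  define w where "w i j = a * ln (P i j) - a*(1-a)*(\<beta> i)\<^sup>2/2" for i j
  have stb: "stationary_dist ?Q' ?p" using alpha_facts(6)[OF sto irr] .
  have sQ': "stochastic_mat ?Q'" and sQ: "stochastic_mat ?Q" using alpha_facts(4)[OF sto irr] by auto
  have Q'pos: "\<forall>i j. ?Q' i j > 0 \<longleftrightarrow> P i j > 0" and Qpos: "\<forall>i j. ?Q i j > 0 \<longleftrightarrow> P i j > 0"
    using alpha_facts(5)[OF sto irr] by auto
  have lp: "?lam > 0" and vp: "\<forall>i. ?v i > 0" using alpha_facts[OF sto irr] by auto
  have Q'row: "\<forall>i. (\<Sum>j\<in>UNIV. ?Q' i j) = 1" and Q'nn: "\<forall>i j. ?Q' i j \<ge> 0"
    using sQ' by (auto simp: stochastic_mat_def)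
  have Qrow: "\<forall>i. (\<Sum>j\<in>UNIV. ?Q i j) = 1" and Qnn: "\<forall>i j. ?Q i j \<ge> 0"
    using sQ by (auto simp: stochastic_mat_def)
  have psum: "(\<Sum>i\<in>UNIV. ?p i) = 1" and pstat: "\<forall>j. (\<Sum>i\<in>UNIV. ?p i * ?Q' i j) = ?p j"
    and pnn: "\<forall>i. ?p i \<ge> 0"
    using stb by (auto simp: stationary_dist_def)
  have sup: "\<forall>i j. ?Q' i j \<noteq> 0 \<longrightarrow> ln (?Q i j) = w i j + ln (?v j) - ln ?lam - ln (?v i)"
  proof (intro allI impI)
    fix i j assume ne: "?Q' i j \<noteq> 0"
    have "?Q' i j > 0" using Q'nn[rule_format, of i j] ne by linarith
    then have Pp: "P i j > 0" using Q'pos by blast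
    have vi: "?v i > 0" and vj: "?v j > 0" using vp by auto
    have Mp: "Mmat P \<beta> a i j > 0" using Pp by (simp add: Mmat_pos)
    have lnM: "ln (Mmat P \<beta> a i j) = w i j"
      using Pp by (simp add: Mmat_def w_def ln_mult ln_powr)
    have "ln (?Q i j) = ln (Mmat P \<beta> a i j) + ln (?v j) - (ln ?lam + ln (?v i))"
      unfolding Qmat_def using Mp vi vj lp by (simp add: ln_div ln_mult)
    then show "ln (?Q i j) = w i j + ln (?v j) - ln ?lam - ln (?v i)" using lnM by simp
  qed
  have gi: "(\<Sum>i\<in>UNIV. \<Sum>j\<in>UNIV. ?p i * ?Q' i j * w i j) - (\<Sum>i\<in>UNIV. \<Sum>j\<in>UNIV. ?p i * ?Q' i j * ln (?Q' i j))
     = ln ?lam + Sg P \<beta> a b"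
    unfolding Sg_def by (rule gibbs_ident[OF Q'row psum pstat sup])
  have "(\<Sum>i\<in>UNIV. \<Sum>j\<in>UNIV. ?p i * ?Q' i j * w i j) =
      (\<Sum>i\<in>UNIV. \<Sum>j\<in>UNIV. a * (?p i * ?Q' i j * ln (P i j)) - (a*(1-a)) * (?p i * (\<beta> i)\<^sup>2/2 * ?Q' i j))"
    by (intro sum.cong refl) (simp add: w_def algebra_simps)
  also have "\<dots> = a * Lf P \<beta> b - (a*(1-a)) * (\<Sum>i\<in>UNIV. ?p i * (\<beta> i)\<^sup>2/2 * (\<Sum>j\<in>UNIV. ?Q' i j))"
    unfolding Lf_def by (simp add: sum_subtractf sum_distrib_left)
  also have "\<dots> = a * Lf P \<beta> b - a*(1-a) * Rfun P \<beta> b"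
    using Q'row by (simp add: Rfun_def)
  finally have wsum: "(\<Sum>i\<in>UNIV. \<Sum>j\<in>UNIV. ?p i * ?Q' i j * w i j) = a * Lf P \<beta> b - a*(1-a) * Rfun P \<beta> b" .
  show "Hfun P \<beta> b + a * Lf P \<beta> b - a*(1-a)*Rfun P \<beta> b = ln (perron_root P \<beta> a) + Sg P \<beta> a b"
    using gi wsum Hfun_formula[OF sto irr, of \<beta> b] by simp
  have sup2: "\<forall>i j. ?Q' i j > 0 \<longleftrightarrow> ?Q i j > 0" using Q'pos Qpos by blast
  show "Sg P \<beta> a b \<le> 0" unfolding Sg_def
    by (rule gibbs_ineq[OF Q'row Qrow Q'nn Qnn pnn sup2])
qed



lemma Sg_same: "Sg P \<beta> a a = 0" by (simp add: Sg_def)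

lemma lemma11:
  fixes P :: "'n::finite \<Rightarrow> 'n \<Rightarrow> real" and \<pi> :: "'n \<Rightarrow> real" and \<beta> :: "'n \<Rightarrow> real"
  assumes "stochastic_mat P" and "irreducible_mat P" and "aperiodic_mat P"
    and "stationary_dist P \<pi>" and "\<forall>i. \<pi> i > 0"
  shows "(Hfun P \<beta> 1 = - (\<Sum>i\<in>UNIV. \<Sum>j\<in>UNIV.
             (if P i j = 0 then 0 else \<pi> i * P i j * ln (P i j)))) \<and>
         (Rfun P \<beta> 1 = (\<Sum>i\<in>UNIV. \<pi> i * (\<beta> i)\<^sup>2 / 2)) \<and>
         (Hfun P \<beta> 0 = ln (spec_rad (zero_one_mat P))) \<and>
         (\<forall>a\<in>{0..1}. \<forall>b\<in>{0..1}. a \<le> b \<longrightarrow>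
           Hfun P \<beta> b - b\<^sup>2 * Rfun P \<beta> b \<le> Hfun P \<beta> a - a\<^sup>2 * Rfun P \<beta> a)"
proof -
  note sto = assms(1) and irr = assms(2) and pist = assms(4) and pipos = assms(5)
  have Pnn: "\<forall>i j. P i j \<ge> 0" and Prow: "\<forall>i. (\<Sum>j\<in>UNIV. P i j) = 1"
    using sto by (auto simp: stochastic_mat_def)
  have Rnn: "Rfun P \<beta> x \<ge> 0" for x
  proof -
    have "\<forall>i. thetabar P \<beta> x i \<ge> 0" using alpha_facts(6)[OF sto irr] by (simp add: stationary_dist_def)
    then show ?thesis unfolding Rfun_def by (intro sum_nonneg) simp
  qed
  have ident: "Hfun P \<beta> a + a * Lf P \<beta> a - a*(1-a)*Rfun P \<beta> a = ln (perron_root P \<beta> a)" for a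
    using key(1)[OF sto irr, of \<beta> a a] by (simp add: Sg_same)
  have ineq: "Hfun P \<beta> b + a * Lf P \<beta> b - a*(1-a)*Rfun P \<beta> b \<le> ln (perron_root P \<beta> a)" for b a
    using key(1)[OF sto irr, where \<beta>=\<beta> and a=a and b=b] key(2)[OF sto irr, where \<beta>=\<beta> and a=a and b=b] by linarith
  have part3: "\<forall>a\<in>{0..1}. \<forall>b\<in>{0..1}. a \<le> b \<longrightarrow>
           Hfun P \<beta> b - b\<^sup>2 * Rfun P \<beta> b \<le> Hfun P \<beta> a - a\<^sup>2 * Rfun P \<beta> a"
  proof (intro ballI impI)
    fix a b :: real assume a: "a \<in> {0..1}" and b: "b \<in> {0..1}" and ab: "a \<le> b"
    show "Hfun P \<beta> b - b\<^sup>2 * Rfun P \<beta> b \<le> Hfun P \<beta> a - a\<^sup>2 * Rfun P \<beta> a"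
    proof (cases "a = b")
      case True then show ?thesis by simp
    next
      case False
      then have ab': "a < b" using ab by simp
      show ?thesis
      proof (rule mono_alg[OF _ ab' Rnn Rnn])
        show "0 \<le> a" using a by simp
        show "Hfun P \<beta> b + a * Lf P \<beta> b - a * (1 - a) * Rfun P \<beta> b
          \<le> Hfun P \<beta> a + a * Lf P \<beta> a - a * (1 - a) * Rfun P \<beta> a"
          using ineq[where a=a and b=b] ident[of a] by linarith
        show "Hfun P \<beta> a + b * Lf P \<beta> a - b * (1 - b) * Rfun P \<beta> a
          \<le> Hfun P \<beta> b + b * Lf P \<beta> b - b * (1 - b) * Rfun P \<beta> b"
          using ineq[where a=b and b=a] ident[of b] by linarith
      qed
    qed
  qed
  have M0: "Mmat P \<beta> 0 = zero_one_mat P"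
    by (intro ext) (simp add: Mmat_def zero_one_mat_def)
  have part2: "Hfun P \<beta> 0 = ln (spec_rad (zero_one_mat P))"
    using ident[of 0] by (simp add: perron_root_def M0)
  have M1: "Mmat P \<beta> 1 = P"
  proof (intro ext)
    fix i j show "Mmat P \<beta> 1 i j = P i j"
      using Pnn[rule_format, of i j] by (auto simp: Mmat_def)
  qed
  have lam1: "perron_root P \<beta> 1 = 1"
    unfolding perron_root_def M1
    by (rule spec_rad_eq[where v="\<lambda>_. 1"]) (use Pnn Prow in auto)
  have ev1: "\<forall>i. (\<Sum>j\<in>UNIV. P i j * perron_vec P \<beta> 1 j) = perron_vec P \<beta> 1 i"
    using alpha_facts(3)[OF sto irr, of \<beta> 1] by (simp add: M1 lam1)
  have vconst: "perron_vec P \<beta> 1 i = perron_vec P \<beta> 1 j" for i j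
    by (rule max_principle[OF irr sto ev1])
  have vpos: "\<forall>i. perron_vec P \<beta> 1 i > 0" using alpha_facts(2)[OF sto irr] by blast
  have Q1: "Qmat P \<beta> 1 = P"
  proof (intro ext)
    fix i j
    have "perron_vec P \<beta> 1 i > 0" using vpos by blast
    then show "Qmat P \<beta> 1 i j = P i j"
      unfolding Qmat_def M1 lam1 using vconst[of j i] by simp
  qed
  have th1: "thetabar P \<beta> 1 = \<pi>"
    using stationary_unique[OF irr sto pist pipos] alpha_facts(6)[OF sto irr, of \<beta> 1] Q1 by simp
  have part1a: "Hfun P \<beta> 1 = - (\<Sum>i\<in>UNIV. \<Sum>j\<in>UNIV.
             (if P i j = 0 then 0 else \<pi> i * P i j * ln (P i j)))"
  proof -
    have "(\<Sum>i\<in>UNIV. \<Sum>j\<in>UNIV. \<pi> i * P i j * ln (P i j)) =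
      (\<Sum>i\<in>UNIV. \<Sum>j\<in>UNIV. (if P i j = 0 then 0 else \<pi> i * P i j * ln (P i j)))"
      by (intro sum.cong refl) simp
    then show ?thesis using Hfun_formula[OF sto irr, of \<beta> 1] by (simp add: th1 Q1)
  qed
  have part1b: "Rfun P \<beta> 1 = (\<Sum>i\<in>UNIV. \<pi> i * (\<beta> i)\<^sup>2 / 2)"
    by (simp add: Rfun_def th1)
  show ?thesis using part1a part1b part2 part3 by blast
qed


end
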